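(* Let $(G,H)$ be a rooted graph and let $J_{\max}\subsetneq H$ be a primal subgraph of $(G,H)$ that is maximal with respect to inclusion among primal subgraphs. Then $m(J_{\max},H)<m(G,H)$.
   Context: For a graph $F$, $v_F,e_F$ are its numbers of vertices and edges. A rooted graph $(G,H)$ consists of a graph $H$ and an induced subgraph $G\subseteq H$ (the roots), with $e_H>e_G$. For subgraphs $A\subsetneq J\subseteq H$, $d(A,J)=(e_J-e_A)/(v_J-v_A)$ and $m(A,H)=\max_{A\subsetneq J\subseteq H}d(A,J)$. A subgraph $J$ with $G\subsetneq J\subseteq H$ and $d(G,J)=m(G,H)$ is called primal for $(G,H)$. *)

theory Defs
  imports Complex_Main "HOL-Library.Extended_Real"
begin

type_synonym 'a graph = "'a set \<times> 'a set set"

definition is_graph :: "'a graph \<Rightarrow> bool" where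
  "is_graph F \<longleftrightarrow> finite (fst F) \<and> (\<forall>e\<in>snd F. e \<subseteq> fst F \<and> card e = 2)"

definition nv :: "'a graph \<Rightarrow> nat" where "nv F = card (fst F)"
definition ne :: "'a graph \<Rightarrow> nat" where "ne F = card (snd F)"

definition subgraph :: "'a graph \<Rightarrow> 'a graph \<Rightarrow> bool" where
  "subgraph A J \<longleftrightarrow> is_graph A \<and> is_graph J \<and> fst A \<subseteq> fst J \<and> snd A \<subseteq> snd J"

definition induced_subgraph :: "'a graph \<Rightarrow> 'a graph \<Rightarrow> bool" where
  "induced_subgraph G H \<longleftrightarrow> subgraph G H \<and> snd G = {e \<in> snd H. e \<subseteq> fst G}"

definition rooted_graph :: "'a graph \<Rightarrow> 'a graph \<Rightarrow> bool" where
  "rooted_graph G H \<longleftrightarrow> is_graph H \<and> induced_subgraph G H \<and> ne G < ne H"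

text \<open>d(A,J) = (e_J - e_A)/(v_J - v_A); when v_J = v_A (and J strictly contains A,
  so e_J > e_A) the density is taken to be +\<infinity>.\<close>
definition dens :: "'a graph \<Rightarrow> 'a graph \<Rightarrow> ereal" where
  "dens A J = (if nv J = nv A then \<infinity>
     else ereal ((real (ne J) - real (ne A)) / (real (nv J) - real (nv A))))"

definition mdens :: "'a graph \<Rightarrow> 'a graph \<Rightarrow> ereal" where
  "mdens A H = Max {dens A J | J. subgraph A J \<and> A \<noteq> J \<and> subgraph J H}"

definition primal :: "'a graph \<Rightarrow> 'a graph \<Rightarrow> 'a graph \<Rightarrow> bool" where
  "primal G H J \<longleftrightarrow> subgraph G J \<and> G \<noteq> J \<and> subgraph J H \<and> dens G J = mdens G H"

end

theory Submission
  imports Defs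
begin

lemma fin_sub: assumes "is_graph H" shows "finite {J. subgraph J H}"
proof -
  have "finite (snd H)" using assms unfolding is_graph_def
    by (meson Pow_iff finite_Pow_iff finite_subset subsetI)
  moreover have "finite (fst H)" using assms unfolding is_graph_def by blast
  ultimately have "finite (Pow (fst H) \<times> Pow (snd H))" by blast
  moreover have "{J. subgraph J H} \<subseteq> Pow (fst H) \<times> Pow (snd H)"
    unfolding subgraph_def by (auto simp: mem_Times_iff)
  ultimately show ?thesis using finite_subset by blast
qed

lemma fin_set: assumes "is_graph H"
  shows "finite {dens A J | J. subgraph A J \<and> A \<noteq> J \<and> subgraph J H}"
proof -
  have "{dens A J | J. subgraph A J \<and> A \<noteq> J \<and> subgraph J H} \<subseteq> dens A ` {J. subgraph J H}"
    by blast
  thus ?thesis using fin_sub[OF assms] finite_subset by blast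
qed

lemma mdens_ge: assumes "is_graph H" "subgraph A J" "A \<noteq> J" "subgraph J H"
  shows "dens A J \<le> mdens A H"
  unfolding mdens_def by (rule Max_ge[OF fin_set[OF assms(1)]]) (use assms in blast)

lemma mdens_in: assumes "is_graph H" "subgraph A H" "A \<noteq> H"
  shows "\<exists>J. subgraph A J \<and> A \<noteq> J \<and> subgraph J H \<and> mdens A H = dens A J"
proof -
  have "subgraph H H" using assms unfolding subgraph_def by auto
  hence ne: "{dens A J | J. subgraph A J \<and> A \<noteq> J \<and> subgraph J H} \<noteq> {}" using assms by blast
  have "mdens A H \<in> {dens A J | J. subgraph A J \<and> A \<noteq> J \<and> subgraph J H}"
    unfolding mdens_def using Max_in[OF fin_set[OF assms(1)] ne] .
  thus ?thesis by auto
qed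

lemma ind_lt: assumes "induced_subgraph A H" "subgraph A J" "A \<noteq> J" "subgraph J H"
  shows "nv A < nv J"
proof -
  have sub: "fst A \<subseteq> fst J" "snd A \<subseteq> snd J" using assms(2) unfolding subgraph_def by auto
  have fin: "finite (fst J)" using assms(2) unfolding subgraph_def is_graph_def by auto
  have "fst A \<noteq> fst J"
  proof
    assume eq: "fst A = fst J"
    have i1: "snd A = {e \<in> snd H. e \<subseteq> fst A}" using assms(1) unfolding induced_subgraph_def by blast
    have i2: "snd J \<subseteq> snd H" using assms(4) unfolding subgraph_def by blast
    have i3: "\<forall>e\<in>snd J. e \<subseteq> fst J" using assms(4) unfolding subgraph_def is_graph_def by blast
    have "snd J \<subseteq> snd A" using i1 i2 i3 eq by blast
    hence "snd A = snd J" using sub by auto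
    with eq have "A = J" by (simp add: prod_eq_iff)
    with assms(3) show False by simp
  qed
  hence "fst A \<subset> fst J" using sub by auto
  thus ?thesis unfolding nv_def using psubset_card_mono fin by blast
qed

lemma sub_trans: "subgraph A B \<Longrightarrow> subgraph B C \<Longrightarrow> subgraph A C"
  unfolding subgraph_def by auto

theorem lemma14:
  fixes G H Jmax :: "'a graph"
  assumes "rooted_graph G H"
    and "primal G H Jmax"
    and "Jmax \<noteq> H"
    and "\<forall>J. primal G H J \<and> subgraph Jmax J \<longrightarrow> J = Jmax"
  shows "mdens Jmax H < mdens G H"
proof -
  have gH: "is_graph H" and indG: "induced_subgraph G H" and eGH: "ne G < ne H"
    using assms(1) unfolding rooted_graph_def by auto
  have GJ: "subgraph G Jmax" "G \<noteq> Jmax" "subgraph Jmax H" and dJ: "dens G Jmax = mdens G H"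
    using assms(2) unfolding primal_def by auto
  have lt1: "nv G < nv Jmax" using ind_lt[OF indG GJ] .
  define m where "m = (real (ne Jmax) - real (ne G)) / (real (nv Jmax) - real (nv G))"
  have mdef: "mdens G H = ereal m" using dJ lt1 unfolding dens_def m_def by auto
  have pos: "real (nv Jmax) - real (nv G) > 0" using lt1 by simp
  have meq: "m * (real (nv Jmax) - real (nv G)) = real (ne Jmax) - real (ne G)"
    unfolding m_def using pos by simp
  have indJ: "induced_subgraph Jmax H"
  proof -
    have "snd Jmax \<subseteq> {e \<in> snd H. e \<subseteq> fst Jmax}"
      using GJ(3) unfolding subgraph_def is_graph_def by auto
    moreover have "{e \<in> snd H. e \<subseteq> fst Jmax} \<subseteq> snd Jmax"
    proof
      fix e assume e: "e \<in> {e \<in> snd H. e \<subseteq> fst Jmax}"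
      show "e \<in> snd Jmax"
      proof (rule ccontr)
        assume ne: "e \<notin> snd Jmax"
        define J' where "J' = (fst Jmax, insert e (snd Jmax))"
        have gJ': "is_graph J'" using GJ(3) gH e unfolding J'_def subgraph_def is_graph_def by auto
        have s1: "subgraph G J'" using GJ(1) gJ' unfolding subgraph_def J'_def by auto
        have s2: "subgraph J' H" using GJ(3) gJ' e unfolding subgraph_def J'_def by auto
        have nvJ': "nv J' = nv Jmax" unfolding nv_def J'_def by simp
        have finE: "finite (snd Jmax)" using GJ(3) gH unfolding subgraph_def is_graph_def
          by (meson Pow_iff finite_Pow_iff finite_subset subsetI)
        have neJ': "ne J' = ne Jmax + 1" unfolding ne_def J'_def using finE ne by simp
        have "G \<noteq> J'" using lt1 nvJ' by auto
        hence "dens G J' \<le> mdens G H" using mdens_ge[OF gH s1 _ s2] by auto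
        moreover have "dens G J' = ereal ((real (ne Jmax) + 1 - real (ne G)) / (real (nv Jmax) - real (nv G)))"
          unfolding dens_def using nvJ' neJ' lt1 by auto
        moreover have "(real (ne Jmax) + 1 - real (ne G)) / (real (nv Jmax) - real (nv G)) > m"
          unfolding m_def using pos by (simp add: divide_strict_right_mono)
        ultimately show False using mdef by auto
      qed
    qed
    ultimately show ?thesis using GJ(3) unfolding induced_subgraph_def by auto
  qed
  obtain J where J: "subgraph Jmax J" "Jmax \<noteq> J" "subgraph J H" and mJ: "mdens Jmax H = dens Jmax J"
    using mdens_in[OF gH GJ(3) assms(3)] by blast
  have lt2: "nv Jmax < nv J" using ind_lt[OF indJ J] .
  show ?thesis
  proof (rule ccontr)
    assume "\<not> ?thesis"
    hence "ereal m \<le> ereal ((real (ne J) - real (ne Jmax)) / (real (nv J) - real (nv Jmax)))"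
      using mJ mdef lt2 unfolding dens_def by auto
    hence "m \<le> (real (ne J) - real (ne Jmax)) / (real (nv J) - real (nv Jmax))" by simp
    hence "m * (real (nv J) - real (nv Jmax)) \<le> real (ne J) - real (ne Jmax)"
      using lt2 by (simp add: le_divide_eq)
    hence "m * (real (nv J) - real (nv G)) \<le> real (ne J) - real (ne G)"
      using meq by (simp add: algebra_simps)
    hence ge: "m \<le> (real (ne J) - real (ne G)) / (real (nv J) - real (nv G))"
      using lt1 lt2 by (simp add: le_divide_eq)
    have sGJ: "subgraph G J" using sub_trans GJ(1) J(1) by blast
    have "G \<noteq> J" using lt1 lt2 by auto
    hence le: "dens G J \<le> mdens G H" using mdens_ge[OF gH sGJ _ J(3)] by auto
    have "dens G J = ereal ((real (ne J) - real (ne G)) / (real (nv J) - real (nv G)))"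
      unfolding dens_def using lt1 lt2 by auto
    hence "dens G J = mdens G H" using le ge mdef by auto
    hence "primal G H J" unfolding primal_def using sGJ \<open>G \<noteq> J\<close> J(3) by auto
    hence "J = Jmax" using assms(4) J(1) by blast
    thus False using J(2) by simp
  qed
qed

end
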